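(* There exists a constant $c>0$ such that, for all $L \geq 1$ and densities $0<\rho \leq L^{2}$, \[ \mathbb{P}_{\rho}\left[\eta_{t}(0) \geq L^{d+4} \text{ for some } t \in [0,L]\right] \leq c\,e^{-L/c}. \]
   Context: Let $d\ge1$ and $p(\cdot)$ a nearest-neighbour probability distribution on $\mathbb{Z}^d$ (supported on $\{\pm e_i\}$, $e_i$ canonical basis) with $0<p(e_i)\le p(-e_i)<1$ for all $i$. Under $\mathbb{P}_\rho$, each site initially holds i.i.d. $\mathrm{Poisson}(\rho)$ particles which move as independent continuous-time random walks jumping at rate $1$ with increment law $p$; $\eta_t(x)$ is the number of particles at $x$ at time $t$. *)

theory Defs
  imports "HOL-Probability.Probability"
begin

text \<open>Sites of Z^d are functions 'd => int, with 'd a finite type, d = CARD('d).\<close>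

definition unit_vec :: "'d \<Rightarrow> ('d \<Rightarrow> int)" where
  "unit_vec i = (\<lambda>j. if j = i then 1 else 0)"

definition nn_law :: "('d::finite \<Rightarrow> int) pmf \<Rightarrow> bool" where
  "nn_law p \<longleftrightarrow>
     set_pmf p \<subseteq> {unit_vec i | i. True} \<union> {(\<lambda>j. - unit_vec i j) | i. True} \<and>
     (\<forall>i. 0 < pmf p (unit_vec i) \<and> pmf p (unit_vec i) \<le> pmf p (\<lambda>j. - unit_vec i j)
          \<and> pmf p (\<lambda>j. - unit_vec i j) < 1)"

type_synonym 'd irw_omega =
  "(('d \<Rightarrow> int) \<Rightarrow> nat) \<times> ((('d \<Rightarrow> int) \<times> nat \<times> nat) \<Rightarrow> real)
     \<times> ((('d \<Rightarrow> int) \<times> nat \<times> nat) \<Rightarrow> ('d \<Rightarrow> int))"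

text \<open>Probability space P_rho: omega = (N, tau, xi) where N x ~ Poisson(rho) is the
  initial number of particles at x (i.i.d.), tau (x,k,j) ~ Exp(1) is the j-th holding time
  of the k-th particle started at x, and xi (x,k,j) ~ p is its j-th jump increment;
  all independent.\<close>
definition irw_space :: "real \<Rightarrow> ('d::finite \<Rightarrow> int) pmf \<Rightarrow> 'd irw_omega measure" where
  "irw_space \<rho> p =
     (PiM UNIV (\<lambda>_::('d \<Rightarrow> int). measure_pmf (poisson_pmf \<rho>))) \<Otimes>\<^sub>M
     ((PiM UNIV (\<lambda>_::(('d \<Rightarrow> int) \<times> nat \<times> nat). density lborel (exponential_density 1))) \<Otimes>\<^sub>M
      (PiM UNIV (\<lambda>_::(('d \<Rightarrow> int) \<times> nat \<times> nat). measure_pmf p)))"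

text \<open>Position at time t of the k-th particle started at x: the continuous-time random
  walk which jumps at the times tau(x,k,0)+...+tau(x,k,j), with increments xi(x,k,j).\<close>
definition irw_pos :: "'d irw_omega \<Rightarrow> ('d \<Rightarrow> int) \<Rightarrow> nat \<Rightarrow> real \<Rightarrow> ('d \<Rightarrow> int)" where
  "irw_pos \<omega> x k t =
     (let \<tau> = fst (snd \<omega>); \<xi> = snd (snd \<omega>);
          J = {j. (\<Sum>i\<le>j. \<tau> (x, k, i)) \<le> t}
      in (\<lambda>i. x i + (\<Sum>j\<in>J. \<xi> (x, k, j) i)))"

definition irw_eta :: "'d irw_omega \<Rightarrow> real \<Rightarrow> ('d \<Rightarrow> int) \<Rightarrow> enat" where
  "irw_eta \<omega> t y =
     (let S = {(x, k). k < fst \<omega> x \<and> irw_pos \<omega> x k t = y}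
      in if finite S then enat (card S) else \<infinity>)"

end

theory Submission
  imports Defs
begin
definition Jset :: "(nat \<Rightarrow> real) \<Rightarrow> real \<Rightarrow> nat set" where
  "Jset S t = {j. S j \<le> t}"

definition same :: "(nat \<Rightarrow> real) \<Rightarrow> real \<Rightarrow> real \<Rightarrow> bool" where
  "same S t t' \<longleftrightarrow> Jset S t = Jset S t' \<or> (infinite (Jset S t) \<and> infinite (Jset S t'))"

lemma liminf_le_if_infinite:
  assumes "infinite (Jset S t)"
  shows "liminf (\<lambda>j. ereal (S j)) \<le> ereal t"
proof (rule ccontr)
  assume "\<not> ?thesis"
  then have "ereal t < liminf (\<lambda>j. ereal (S j))" by simp
  then have "eventually (\<lambda>j. ereal t < ereal (S j)) sequentially"
    by (rule less_LiminfD)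
  then obtain N where "\<forall>j\<ge>N. t < S j" by (auto simp: eventually_sequentially)
  then have "Jset S t \<subseteq> {..<N}" unfolding Jset_def by (metis (mono_tags) lessThan_iff linorder_not_less mem_Collect_eq subsetI)
  with assms show False using finite_subset by blast
qed

lemma infinite_if_liminf_less:
  assumes "liminf (\<lambda>j. ereal (S j)) < ereal t"
  shows "infinite (Jset S t)"
proof
  assume fin: "finite (Jset S t)"
  have "\<not> ereal t \<le> liminf (\<lambda>j. ereal (S j))" using assms by simp
  then obtain y where y: "y < ereal t" and nev: "\<not> eventually (\<lambda>j. y < ereal (S j)) sequentially"
    by (metis le_Liminf_iff)
  from finite_nat_bounded[OF fin] obtain N where N0: "Jset S t \<subseteq> {..<N}" by blast
  then have N: "\<forall>j\<in>Jset S t. j < N" by auto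
  have "\<forall>j\<ge>N. y < ereal (S j)"
  proof (intro allI impI)
    fix j assume "N \<le> j"
    then have "j \<notin> Jset S t" using N by auto
    then have "t < S j" by (simp add: Jset_def)
    then have "ereal t < ereal (S j)" by simp
    then show "y < ereal (S j)" using y by (meson less_trans)
  qed
  then have "eventually (\<lambda>j. y < ereal (S j)) sequentially" by (auto simp: eventually_sequentially)
  with nev show False by simp
qed

lemma local_same:
  assumes noteq: "\<forall>j. S j \<noteq> t0" and nl: "real_of_ereal (liminf (\<lambda>j. ereal (S j))) \<noteq> t0"
  shows "\<exists>t1<t0. \<forall>t\<in>{t1..t0}. same S t t0"
proof (cases "finite (Jset S t0)")
  case True
  define t1 where "t1 = Max (S ` Jset S t0 \<union> {t0 - 1})"
  have fin: "finite (S ` Jset S t0 \<union> {t0 - 1})" using True by simp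
  have "t1 < t0"
    unfolding t1_def using fin noteq
    by (subst Max_less_iff) (auto simp: Jset_def less_le)
  moreover have "same S t t0" if "t \<in> {t1..t0}" for t
  proof -
    have "Jset S t = Jset S t0"
    proof
      show "Jset S t \<subseteq> Jset S t0" using that by (auto simp: Jset_def)
      show "Jset S t0 \<subseteq> Jset S t"
      proof
        fix j assume j: "j \<in> Jset S t0"
        have "S j \<le> t1" unfolding t1_def using fin j by (intro Max_ge) auto
        then show "j \<in> Jset S t" using that by (auto simp: Jset_def)
      qed
    qed
    then show ?thesis by (simp add: same_def)
  qed
  ultimately show ?thesis by blast
next
  case False
  let ?l = "liminf (\<lambda>j. ereal (S j))"
  have le: "?l \<le> ereal t0" using liminf_le_if_infinite[OF False] .
  have ne: "?l \<noteq> ereal t0" using nl by auto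
  have lt: "?l < ereal t0" using le ne by simp
  obtain t1 where t1: "?l < ereal t1" "t1 < t0"
  proof (cases ?l)
    case (real r) then show ?thesis using lt by (intro that[of "(r + t0)/2"]) auto
  next
    case PInf then show ?thesis using lt by simp
  next
    case MInf then show ?thesis by (intro that[of "t0 - 1"]) auto
  qed
  have "same S t t0" if "t \<in> {t1..t0}" for t
  proof -
    have "?l < ereal t" using t1 that using atLeastAtMost_iff ereal_less_eq(3) less_le_trans by (metis)
    then have "infinite (Jset S t)" by (rule infinite_if_liminf_less)
    then show ?thesis using False by (simp add: same_def)
  qed
  then show ?thesis using t1 by blast
qed

lemma candidate_exists:
  fixes S :: "'f \<Rightarrow> nat \<Rightarrow> real" and P :: "'f \<Rightarrow> real \<Rightarrow> bool"
  assumes F: "finite F"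
    and inv: "\<And>f t t'. f \<in> F \<Longrightarrow> same (S f) t t' \<Longrightarrow> P f t = P f t'"
    and t0: "t0 \<in> {0..L}" and good: "\<forall>f\<in>F. P f t0"
  shows "\<exists>c \<in> range real_of_rat \<union> range (\<lambda>(f,j). S f j) \<union> range (\<lambda>f. real_of_ereal (liminf (\<lambda>j. ereal (S f j)))).
           c \<in> {0..L} \<and> (\<forall>f\<in>F. P f c)"
    (is "\<exists>c\<in>?C. _")
proof (cases "t0 \<in> ?C")
  case True
  then show ?thesis using t0 good by blast
next
  case False
  have "t0 \<noteq> 0" using False by (metis UnCI of_rat_0 rangeI)
  then have t0pos: "0 < t0" using t0 by auto
  have "\<forall>f\<in>F. \<exists>t1<t0. \<forall>t\<in>{t1..t0}. same (S f) t t0"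
  proof
    fix f assume "f \<in> F"
    have "\<forall>j. S f j \<noteq> t0"
    proof
      fix j show "S f j \<noteq> t0" using False by (metis (no_types, lifting) UnCI case_prod_conv rangeI)
    qed
    moreover have "real_of_ereal (liminf (\<lambda>j. ereal (S f j))) \<noteq> t0" using False by blast
    ultimately show "\<exists>t1<t0. \<forall>t\<in>{t1..t0}. same (S f) t t0" by (rule local_same)
  qed
  then obtain t1 where t1: "\<And>f. f \<in> F \<Longrightarrow> t1 f < t0 \<and> (\<forall>t\<in>{t1 f..t0}. same (S f) t t0)"
    by metis
  define ts where "ts = Max (insert 0 (t1 ` F))"
  have fin: "finite (insert 0 (t1 ` F))" using F by simp
  have "ts < t0" unfolding ts_def using fin t0pos t1 by (subst Max_less_iff) auto
  then obtain q where q: "q \<in> \<rat>" "ts < q" "q < t0" using Rats_dense_in_real by blast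
  have "0 \<le> ts" unfolding ts_def using fin by (intro Max_ge) auto
  have tsge: "t1 f \<le> ts" if "f \<in> F" for f unfolding ts_def using fin that by (intro Max_ge) auto
  have "q \<in> {0..L}" using q \<open>0 \<le> ts\<close> t0 by auto
  moreover have "\<forall>f\<in>F. P f q"
  proof
    fix f assume f: "f \<in> F"
    have "q \<in> {t1 f..t0}" using q tsge[OF f] by auto
    then have "same (S f) q t0" using t1[OF f] by blast
    then show "P f q" using inv[OF f] good f by blast
  qed
  moreover have "q \<in> ?C" using q(1) by (auto simp: Rats_def)
  ultimately show ?thesis by blast
qed

lemma N_meas'[measurable]: "(\<lambda>\<omega>::'d::finite irw_omega. fst \<omega> x) \<in> measurable (irw_space \<rho> p) (count_space UNIV)"
proof -
  have "(\<lambda>\<omega>::'d::finite irw_omega. fst \<omega> x) \<in> measurable (irw_space \<rho> p) (measure_pmf (poisson_pmf \<rho>))"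
    unfolding irw_space_def by measurable
  moreover have "(\<lambda>v. v) \<in> measurable (measure_pmf (poisson_pmf \<rho>)) (count_space UNIV)" by simp
  ultimately show ?thesis by (rule measurable_compose)
qed
lemma xi_meas'[measurable]: "(\<lambda>\<omega>::'d::finite irw_omega. snd (snd \<omega>) y i) \<in> measurable (irw_space \<rho> p) (count_space UNIV)"
proof -
  have "(\<lambda>\<omega>::'d::finite irw_omega. snd (snd \<omega>) y) \<in> measurable (irw_space \<rho> p) (measure_pmf p)"
    unfolding irw_space_def by measurable
  moreover have "(\<lambda>v. v i) \<in> measurable (measure_pmf p) (count_space UNIV)" by simp
  ultimately show ?thesis by (rule measurable_compose)
qed
lemma xi_meas[measurable]: "(\<lambda>\<omega>::'d::finite irw_omega. real_of_int (snd (snd \<omega>) y i)) \<in> borel_measurable (irw_space \<rho> p)"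
  using xi_meas' by (rule measurable_compose) simp
lemma tau_meas[measurable]: "(\<lambda>\<omega>::'d::finite irw_omega. fst (snd \<omega>) y) \<in> borel_measurable (irw_space \<rho> p)"
  unfolding irw_space_def by measurable

definition Sx :: "'d irw_omega \<Rightarrow> ('d \<Rightarrow> int) \<times> nat \<Rightarrow> nat \<Rightarrow> real" where
  "Sx \<omega> f j = (\<Sum>i\<le>j. fst (snd \<omega>) (fst f, snd f, i))"

definition Good :: "'d irw_omega \<Rightarrow> ('d \<Rightarrow> int) \<times> nat \<Rightarrow> real \<Rightarrow> bool" where
  "Good \<omega> f t \<longleftrightarrow> snd f < fst \<omega> (fst f) \<and> irw_pos \<omega> (fst f) (snd f) t = (\<lambda>_. 0)"

definition GoodM :: "'d::finite irw_omega \<Rightarrow> ('d \<Rightarrow> int) \<times> nat \<Rightarrow> real \<Rightarrow> bool" where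
  "GoodM \<omega> f t \<longleftrightarrow> snd f < fst \<omega> (fst f) \<and>
     ((\<exists>xs::nat list. (\<forall>j. (j \<in> set xs) = (Sx \<omega> f j \<le> t)) \<and>
         (\<forall>i. real_of_int (fst f i) + (\<Sum>j\<in>set xs. real_of_int (snd (snd \<omega>) (fst f, snd f, j) i)) = 0))
      \<or> ((\<forall>n. \<exists>j\<ge>n. Sx \<omega> f j \<le> t) \<and> (\<forall>i. fst f i = 0)))"

lemma Sx_meas[measurable]: "(\<lambda>\<omega>. Sx \<omega> f j) \<in> borel_measurable (irw_space \<rho> p)"
  unfolding Sx_def by measurable

lemma GoodM_meas[measurable]:
  assumes [measurable]: "c \<in> borel_measurable (irw_space \<rho> p)"
  shows "Measurable.pred (irw_space \<rho> p) (\<lambda>\<omega>. GoodM \<omega> f (c \<omega>))"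
  unfolding GoodM_def by measurable

lemma pos_eq: "irw_pos \<omega> x k t = (\<lambda>i. x i + (\<Sum>j\<in>Jset (Sx \<omega> (x,k)) t. snd (snd \<omega>) (x,k,j) i))"
  by (simp add: irw_pos_def Jset_def Sx_def Let_def)

lemma Good_GoodM: "Good \<omega> f t = GoodM \<omega> f t"
proof -
  obtain x k where f: "f = (x,k)" by (cases f)
  let ?J = "Jset (Sx \<omega> (x,k)) t"
  have "irw_pos \<omega> x k t = (\<lambda>_. 0) \<longleftrightarrow>
     ((\<exists>xs::nat list. (\<forall>j. (j \<in> set xs) = (Sx \<omega> f j \<le> t)) \<and>
         (\<forall>i. real_of_int (fst f i) + (\<Sum>j\<in>set xs. real_of_int (snd (snd \<omega>) (fst f, snd f, j) i)) = 0))
      \<or> ((\<forall>n. \<exists>j\<ge>n. Sx \<omega> f j \<le> t) \<and> (\<forall>i. fst f i = 0)))" (is "?L \<longleftrightarrow> ?A \<or> ?B")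
  proof (cases "finite ?J")
    case True
    have nB: "\<not> ?B" using True unfolding f Jset_def by (metis (mono_tags) infinite_nat_iff_unbounded_le mem_Collect_eq fst_conv)
    obtain ys where ys: "set ys = ?J" using True finite_list by blast
    have "?L \<longleftrightarrow> (\<forall>i. x i + (\<Sum>j\<in>?J. snd (snd \<omega>) (x,k,j) i) = 0)"
      by (simp add: pos_eq fun_eq_iff)
    also have "\<dots> \<longleftrightarrow> ?A"
    proof
      assume H: "\<forall>i. x i + (\<Sum>j\<in>?J. snd (snd \<omega>) (x,k,j) i) = 0"
      show ?A
      proof (intro exI[of _ ys] conjI allI)
        fix j show "(j \<in> set ys) = (Sx \<omega> f j \<le> t)" using ys f by (simp add: Jset_def)
      next
        fix i
        have "real_of_int (x i + (\<Sum>j\<in>?J. snd (snd \<omega>) (x,k,j) i)) = 0" using H by simp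
        then show "real_of_int (fst f i) + (\<Sum>j\<in>set ys. real_of_int (snd (snd \<omega>) (fst f, snd f, j) i)) = 0"
          using ys f by simp
      qed
    next
      assume ?A
      then obtain xs where xs: "\<forall>j. (j \<in> set xs) = (Sx \<omega> f j \<le> t)"
        and s: "\<forall>i. real_of_int (fst f i) + (\<Sum>j\<in>set xs. real_of_int (snd (snd \<omega>) (fst f, snd f, j) i)) = 0"
        by blast
      have "set xs = ?J" using xs f by (auto simp: Jset_def)
      then show "\<forall>i. x i + (\<Sum>j\<in>?J. snd (snd \<omega>) (x,k,j) i) = 0"
      proof (intro allI)
        fix i assume "set xs = ?J"
        have "real_of_int (x i + (\<Sum>j\<in>?J. snd (snd \<omega>) (x,k,j) i)) = 0"
          using s \<open>set xs = ?J\<close> f by simp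
        then show "x i + (\<Sum>j\<in>?J. snd (snd \<omega>) (x,k,j) i) = 0" by linarith
      qed
    qed
    finally show ?thesis using nB by blast
  next
    case False
    have nA: "\<not> ?A"
    proof
      assume ?A
      then obtain xs where xs: "\<forall>j. (j \<in> set xs) = (Sx \<omega> f j \<le> t)" by blast
      have "set xs = ?J" using xs f by (auto simp: Jset_def)
      then show False using False by (metis List.finite_set)
    qed
    have inf: "\<forall>n. \<exists>j\<ge>n. Sx \<omega> f j \<le> t"
      using False unfolding f by (auto simp: infinite_nat_iff_unbounded_le Jset_def)
    have "?L \<longleftrightarrow> x = (\<lambda>_. 0)" using False by (simp add: pos_eq)
    also have "\<dots> \<longleftrightarrow> ?B" using inf f by (auto simp: fun_eq_iff)
    finally show ?thesis using nA by blast
  qed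
  note eq = this
  show ?thesis unfolding Good_def GoodM_def using eq f by (simp only: fst_conv snd_conv)
qed

lemma pos_inv: "same (Sx \<omega> (x,k)) t t' \<Longrightarrow> irw_pos \<omega> x k t = irw_pos \<omega> x k t'"
  unfolding same_def pos_eq by (elim disjE) simp_all

lemma Good_inv: "same (Sx \<omega> f) t t' \<Longrightarrow> Good \<omega> f t = Good \<omega> f t'"
  by (cases f) (simp add: Good_def pos_inv)

lemma card_ge_iff_list:
  fixes S :: "'a set" and K :: real
  shows "ereal K \<le> ereal_of_enat (if finite S then enat (card S) else \<infinity>) \<longleftrightarrow>
         (\<exists>F. distinct F \<and> length F = nat \<lceil>K\<rceil> \<and> set F \<subseteq> S)"
proof
  assume H: "ereal K \<le> ereal_of_enat (if finite S then enat (card S) else \<infinity>)"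
  obtain T where T: "T \<subseteq> S" "finite T" "card T = nat \<lceil>K\<rceil>"
  proof (cases "finite S")
    case True
    then have "K \<le> real (card S)" using H by simp
    then have "nat \<lceil>K\<rceil> \<le> card S" by linarith
    then obtain T where "T \<subseteq> S" "card T = nat \<lceil>K\<rceil>" using obtain_subset_with_card_n by metis
    moreover have "finite T" using True \<open>T \<subseteq> S\<close> finite_subset by blast
    ultimately show ?thesis using that by blast
  next
    case False
    then obtain T where "T \<subseteq> S" "finite T" "card T = nat \<lceil>K\<rceil>" using infinite_arbitrarily_large by metis
    then show ?thesis using that by blast
  qed
  obtain F where "set F = T" "distinct F" using T(2) finite_distinct_list by blast
  then show "\<exists>F. distinct F \<and> length F = nat \<lceil>K\<rceil> \<and> set F \<subseteq> S"
    using T distinct_card by (intro exI[of _ F]) fastforce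
next
  assume "\<exists>F. distinct F \<and> length F = nat \<lceil>K\<rceil> \<and> set F \<subseteq> S"
  then obtain F where F: "distinct F" "length F = nat \<lceil>K\<rceil>" "set F \<subseteq> S" by blast
  show "ereal K \<le> ereal_of_enat (if finite S then enat (card S) else \<infinity>)"
  proof (cases "finite S")
    case True
    have "card (set F) \<le> card S" using True F(3) card_mono by blast
    then have "nat \<lceil>K\<rceil> \<le> card S" using F distinct_card by metis
    then have "K \<le> real (card S)" by linarith
    then show ?thesis using True by simp
  next
    case False then show ?thesis by simp
  qed
qed

lemma eta_ge_iff:
  "ereal K \<le> ereal_of_enat (irw_eta \<omega> t (\<lambda>_. 0)) \<longleftrightarrow>
   (\<exists>F. distinct F \<and> length F = nat \<lceil>K\<rceil> \<and> (\<forall>f\<in>set F. Good \<omega> f t))"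
proof -
  have e: "irw_eta \<omega> t (\<lambda>_. 0) = (if finite {f. Good \<omega> f t} then enat (card {f. Good \<omega> f t}) else \<infinity>)"
    by (simp add: irw_eta_def Good_def case_prod_beta' Let_def cong: conj_cong)
  show ?thesis unfolding e card_ge_iff_list by (simp only: subset_iff mem_Collect_eq Ball_def)
qed

definition cand :: "rat + (((('d \<Rightarrow> int) \<times> nat) \<times> nat) + (('d \<Rightarrow> int) \<times> nat)) \<Rightarrow> 'd irw_omega \<Rightarrow> real" where
  "cand c \<omega> = (case c of Inl q \<Rightarrow> of_rat q | Inr (Inl (f, j)) \<Rightarrow> Sx \<omega> f j
       | Inr (Inr f) \<Rightarrow> real_of_ereal (liminf (\<lambda>j. ereal (Sx \<omega> f j))))"

lemma cand_meas[measurable]: "cand c \<in> borel_measurable (irw_space \<rho> p)"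
proof (cases c)
  case (Inl q)
  then have "cand c = (\<lambda>_. of_rat q)" by (simp add: cand_def fun_eq_iff)
  then show ?thesis by simp
next
  case (Inr r)
  show ?thesis
  proof (cases r)
    case (Inl fj)
    obtain f j where "fj = (f, j)" by (cases fj)
    then have "cand c = (\<lambda>\<omega>. Sx \<omega> f j)" using Inr Inl by (simp add: cand_def fun_eq_iff)
    then show ?thesis by simp
  next
    case (Inr f)
    then have "cand c = (\<lambda>\<omega>. real_of_ereal (liminf (\<lambda>j. ereal (Sx \<omega> f j))))"
      using \<open>c = Inr r\<close> by (simp add: cand_def fun_eq_iff)
    then show ?thesis by simp
  qed
qed

lemma A_eq:
  "{\<omega> \<in> space (irw_space \<rho> p). \<exists>t\<in>{0..L}. ereal K \<le> ereal_of_enat (irw_eta \<omega> t (\<lambda>_. 0))} =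
   {\<omega> \<in> space (irw_space \<rho> p). \<exists>F. distinct F \<and> length F = nat \<lceil>K\<rceil> \<and>
       (\<exists>c. cand c \<omega> \<in> {0..L} \<and> (\<forall>f\<in>set F. GoodM \<omega> f (cand c \<omega>)))}"
proof (intro Collect_cong conj_cong refl iffI)
  fix \<omega> :: "'d::finite irw_omega"
  assume "\<exists>t\<in>{0..L}. ereal K \<le> ereal_of_enat (irw_eta \<omega> t (\<lambda>_. 0))"
  then obtain t F where t: "t \<in> {0..L}" and F: "distinct F" "length F = nat \<lceil>K\<rceil>" "\<forall>f\<in>set F. Good \<omega> f t"
    using eta_ge_iff by metis
  have "\<exists>c \<in> range real_of_rat \<union> range (\<lambda>(f,j). Sx \<omega> f j) \<union> range (\<lambda>f. real_of_ereal (liminf (\<lambda>j. ereal (Sx \<omega> f j)))).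
           c \<in> {0..L} \<and> (\<forall>f\<in>set F. Good \<omega> f c)"
  proof (rule candidate_exists[where S="Sx \<omega>" and P="Good \<omega>"])
    show "finite (set F)" by simp
    show "t \<in> {0..L}" by (rule t)
    show "\<forall>f\<in>set F. Good \<omega> f t" by (rule F(3))
    fix f t t' assume "same (Sx \<omega> f) t t'"
    then show "Good \<omega> f t = Good \<omega> f t'" by (rule Good_inv)
  qed
  then obtain c0 where c0: "c0 \<in> range real_of_rat \<union> range (\<lambda>(f,j). Sx \<omega> f j) \<union> range (\<lambda>f. real_of_ereal (liminf (\<lambda>j. ereal (Sx \<omega> f j))))"
    and c0': "c0 \<in> {0..L}" "\<forall>f\<in>set F. Good \<omega> f c0" by blast
  obtain c where "cand c \<omega> = c0"
  proof -
    from c0 consider (a) q where "c0 = of_rat q" | (b) f j where "c0 = Sx \<omega> f j"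
      | (c) f where "c0 = real_of_ereal (liminf (\<lambda>j. ereal (Sx \<omega> f j)))" by auto
    then show ?thesis
    proof cases
      case a then show ?thesis using that[of "Inl q"] by (simp add: cand_def)
    next
      case b then show ?thesis using that[of "Inr (Inl (f, j))"] by (simp add: cand_def)
    next
      case c then show ?thesis using that[of "Inr (Inr f)"] by (simp add: cand_def)
    qed
  qed
  then show "\<exists>F. distinct F \<and> length F = nat \<lceil>K\<rceil> \<and> (\<exists>c. cand c \<omega> \<in> {0..L} \<and> (\<forall>f\<in>set F. GoodM \<omega> f (cand c \<omega>)))"
    using F c0' Good_GoodM by metis
next
  fix \<omega> :: "'d::finite irw_omega"
  assume "\<exists>F. distinct F \<and> length F = nat \<lceil>K\<rceil> \<and> (\<exists>c. cand c \<omega> \<in> {0..L} \<and> (\<forall>f\<in>set F. GoodM \<omega> f (cand c \<omega>)))"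
  then obtain F c where "distinct F" "length F = nat \<lceil>K\<rceil>" "cand c \<omega> \<in> {0..L}" "\<forall>f\<in>set F. GoodM \<omega> f (cand c \<omega>)"
    by blast
  then show "\<exists>t\<in>{0..L}. ereal K \<le> ereal_of_enat (irw_eta \<omega> t (\<lambda>_. 0))"
    using eta_ge_iff Good_GoodM by metis
qed

lemma A_meas:
  "{\<omega> \<in> space (irw_space \<rho> p). \<exists>t\<in>{0..L}. ereal K \<le> ereal_of_enat (irw_eta \<omega> t (\<lambda>_. 0))} \<in> sets (irw_space \<rho> p)"
  unfolding A_eq by measurable

lemma PiM_prod_nn:
  fixes M :: "'i \<Rightarrow> 'a measure"
  assumes P: "\<And>i. prob_space (M i)" and J: "finite J"
    and f[measurable]: "\<And>i. i \<in> J \<Longrightarrow> f i \<in> borel_measurable (M i)"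
  shows "(\<integral>\<^sup>+\<omega>. (\<Prod>i\<in>J. f i (\<omega> i)) \<partial>PiM UNIV M) = (\<Prod>i\<in>J. \<integral>\<^sup>+x. f i x \<partial>M i)"
proof -
  interpret product_prob_space M UNIV using P by (rule product_prob_spaceI)
  have m: "(\<lambda>y. \<Prod>i\<in>J. f i (y i)) \<in> borel_measurable (PiM J M)"
  proof (intro borel_measurable_prod_ennreal)
    fix i assume i: "i \<in> J"
    show "(\<lambda>y. f i (y i)) \<in> borel_measurable (PiM J M)"
      using measurable_component_singleton[OF i, of M] f[OF i] by (rule measurable_compose)
  qed
  have "(\<integral>\<^sup>+\<omega>. (\<Prod>i\<in>J. f i (\<omega> i)) \<partial>PiM UNIV M) = (\<integral>\<^sup>+\<omega>. (\<lambda>y. \<Prod>i\<in>J. f i (y i)) (restrict \<omega> J) \<partial>PiM UNIV M)"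
    by (intro nn_integral_cong prod.cong) auto
  also have "\<dots> = (\<integral>\<^sup>+y. (\<Prod>i\<in>J. f i (y i)) \<partial>distr (PiM UNIV M) (PiM J M) (\<lambda>\<omega>. restrict \<omega> J))"
    apply (rule nn_integral_distr[symmetric])
     apply (rule measurable_restrict_subset)
     apply simp
    using m by simp
  also have "\<dots> = (\<integral>\<^sup>+y. (\<Prod>i\<in>J. f i (y i)) \<partial>PiM J M)"
    using J by (simp add: distr_PiM_restrict_finite)
  also have "\<dots> = (\<Prod>i\<in>J. \<integral>\<^sup>+x. f i x \<partial>M i)"
    using J by (rule product_nn_integral_prod) (rule f)
  finally show ?thesis .
qed

lemma PiM_single_nn:
  fixes M :: "'i \<Rightarrow> 'a measure"
  assumes P: "\<And>i. prob_space (M i)" and f[measurable]: "f \<in> borel_measurable (M i)"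
  shows "(\<integral>\<^sup>+\<omega>. f (\<omega> i) \<partial>PiM UNIV M) = (\<integral>\<^sup>+x. f x \<partial>M i)"
  using PiM_prod_nn[OF P, of "{i}" "\<lambda>_. f"] f by simp

lemma pair_nn:
  assumes P1: "prob_space M1" and P2: "prob_space M2"
    and f[measurable]: "f \<in> borel_measurable M1" and g[measurable]: "g \<in> borel_measurable M2"
  shows "(\<integral>\<^sup>+\<omega>. f (fst \<omega>) * g (snd \<omega>) \<partial>(M1 \<Otimes>\<^sub>M M2)) = (\<integral>\<^sup>+x. f x \<partial>M1) * (\<integral>\<^sup>+y. g y \<partial>M2)"
proof -
  interpret M2: prob_space M2 by (rule P2)
  have "(\<integral>\<^sup>+\<omega>. f (fst \<omega>) * g (snd \<omega>) \<partial>(M1 \<Otimes>\<^sub>M M2)) = (\<integral>\<^sup>+x. \<integral>\<^sup>+y. f x * g y \<partial>M2 \<partial>M1)"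
    by (rule M2.nn_integral_fst[symmetric, where f="\<lambda>\<omega>. f (fst \<omega>) * g (snd \<omega>)", simplified]) measurable
  also have "\<dots> = (\<integral>\<^sup>+x. f x * (\<integral>\<^sup>+y. g y \<partial>M2) \<partial>M1)"
    by (intro nn_integral_cong nn_integral_cmult) simp
  also have "\<dots> = (\<integral>\<^sup>+x. f x \<partial>M1) * (\<integral>\<^sup>+y. g y \<partial>M2)"
    by (rule nn_integral_multc) simp
  finally show ?thesis .
qed

lemma pair_fst_nn:
  assumes P1: "prob_space M1" and P2: "prob_space M2" and f[measurable]: "f \<in> borel_measurable M1"
  shows "(\<integral>\<^sup>+\<omega>. f (fst \<omega>) \<partial>(M1 \<Otimes>\<^sub>M M2)) = (\<integral>\<^sup>+x. f x \<partial>M1)"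
  using pair_nn[OF P1 P2 f, of "\<lambda>_. 1"] P2 by (simp add: prob_space.emeasure_space_1)

lemma pair_snd_nn:
  assumes P1: "prob_space M1" and P2: "prob_space M2" and g[measurable]: "g \<in> borel_measurable M2"
  shows "(\<integral>\<^sup>+\<omega>. g (snd \<omega>) \<partial>(M1 \<Otimes>\<^sub>M M2)) = (\<integral>\<^sup>+x. g x \<partial>M2)"
  using pair_nn[OF P1 P2 _ g, of "\<lambda>_. 1"] P1 by (simp add: prob_space.emeasure_space_1)

lemma poisson_exp_moment:
  assumes "0 < \<rho>"
  shows "(\<integral>\<^sup>+n. ennreal (exp (real n)) \<partial>measure_pmf (poisson_pmf \<rho>)) = ennreal (exp (\<rho> * (exp 1 - 1)))"
proof -
  have s: "(\<lambda>n. (\<rho> * exp 1) ^ n / fact n) sums exp (\<rho> * exp 1)"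
    using exp_converges[of "\<rho> * exp 1"] by (simp add: divide_inverse mult.commute)
  have "(\<integral>\<^sup>+n. ennreal (exp (real n)) \<partial>measure_pmf (poisson_pmf \<rho>)) =
        (\<Sum>n. ennreal (exp (-\<rho>) * ((\<rho> * exp 1) ^ n / fact n)))"
    using assms by (simp add: nn_integral_measure_pmf nn_integral_count_space_nat ennreal_mult'[symmetric]
        power_mult_distrib exp_of_nat_mult[symmetric] mult_ac)
  also have "\<dots> = ennreal (\<Sum>n. exp (-\<rho>) * ((\<rho> * exp 1) ^ n / fact n))"
  proof (rule suminf_ennreal2)
    show "summable (\<lambda>n. exp (-\<rho>) * ((\<rho> * exp 1) ^ n / fact n))"
      by (rule summable_mult[OF sums_summable[OF s]])
  qed (use assms in simp)
  also have "(\<Sum>n. exp (-\<rho>) * ((\<rho> * exp 1) ^ n / fact n)) = exp (-\<rho>) * exp (\<rho> * exp 1)"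
    using sums_mult[OF s, of "exp (-\<rho>)"] sums_unique by metis
  also have "\<dots> = exp (\<rho> * (exp 1 - 1))" by (subst mult_exp_exp) (simp add: algebra_simps)
  finally show ?thesis .
qed

lemma poisson_mean:
  assumes "0 < \<rho>"
  shows "(\<integral>\<^sup>+n. ennreal (real n) \<partial>measure_pmf (poisson_pmf \<rho>)) = ennreal \<rho>"
proof -
  have s0: "(\<lambda>n. \<rho> ^ n / fact n) sums exp \<rho>"
    using exp_converges[of "\<rho>"] by (simp add: divide_inverse mult.commute)
  have s1: "(\<lambda>n. exp (-\<rho>) * \<rho> * (\<rho> ^ n / fact n)) sums (exp (-\<rho>) * \<rho> * exp \<rho>)"
    by (rule sums_mult[OF s0])
  define g where "g n = exp (-\<rho>) * (real n * \<rho> ^ n / fact n)" for n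
  have gSuc: "(\<lambda>n. g (Suc n)) = (\<lambda>n. exp (-\<rho>) * \<rho> * (\<rho> ^ n / fact n))"
  proof
    fix n
    have "real (Suc n) * \<rho> ^ Suc n / fact (Suc n) = \<rho> * (\<rho> ^ n / fact n)"
      by (simp add: fact_Suc del: of_nat_Suc)
    then show "g (Suc n) = exp (-\<rho>) * \<rho> * (\<rho> ^ n / fact n)" by (simp add: g_def)
  qed
  have e: "exp (-\<rho>) * \<rho> * exp \<rho> = \<rho>" by (simp add: exp_minus field_simps)
  have "(\<lambda>n. g (Suc n)) sums \<rho>" using s1 unfolding gSuc e .
  then have "g sums (\<rho> + g 0)" using sums_Suc_iff by blast
  then have sg: "g sums \<rho>" by (simp add: g_def)
  have "(\<integral>\<^sup>+n. ennreal (real n) \<partial>measure_pmf (poisson_pmf \<rho>)) = (\<Sum>n. ennreal (g n))"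
    using assms by (simp add: nn_integral_measure_pmf nn_integral_count_space_nat ennreal_mult'[symmetric] g_def mult_ac)
  also have "\<dots> = ennreal (\<Sum>n. g n)"
  proof (rule suminf_ennreal2)
    show "summable g" using sg by (rule sums_summable)
  qed (use assms in \<open>simp add: g_def\<close>)
  also have "(\<Sum>n. g n) = \<rho>" using sg sums_unique by metis
  finally show ?thesis .
qed

lemma exp_density_laplace:
  assumes "0 \<le> \<beta>"
  shows "(\<integral>\<^sup>+s. ennreal (exp (- \<beta> * s)) \<partial>density lborel (exponential_density 1)) = ennreal (1 / (1 + \<beta>))"
proof -
  have "(\<integral>\<^sup>+s. ennreal (exp (- \<beta> * s)) \<partial>density lborel (exponential_density 1))
      = (\<integral>\<^sup>+s. ennreal (exponential_density 1 s) * ennreal (exp (- \<beta> * s)) \<partial>lborel)"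
    by (rule nn_integral_density) simp_all
  also have "\<dots> = (\<integral>\<^sup>+s. ennreal (1 / (1 + \<beta>)) * ennreal (exponential_density (1 + \<beta>) s) \<partial>lborel)"
    using assms by (intro nn_integral_cong)
      (auto simp: exponential_density_def ennreal_mult'[symmetric] mult_exp_exp field_simps)
  also have "\<dots> = ennreal (1 / (1 + \<beta>)) * (\<integral>\<^sup>+s. ennreal (exponential_density (1 + \<beta>) s) \<partial>lborel)"
    by (rule nn_integral_cmult) simp
  also have "(\<integral>\<^sup>+s. ennreal (exponential_density (1 + \<beta>) s) \<partial>lborel) = 1"
  proof -
    interpret prob_space "density lborel (exponential_density (1 + \<beta>))"
      using assms by (intro prob_space_exponential_density) simp
    have "emeasure (density lborel (exponential_density (1 + \<beta>))) UNIV = 1"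
      using emeasure_space_1 by simp
    then show ?thesis by (simp add: emeasure_density)
  qed
  finally show ?thesis by simp
qed

abbreviation "MN \<rho> \<equiv> PiM (UNIV :: ('d::finite \<Rightarrow> int) set) (\<lambda>_. measure_pmf (poisson_pmf \<rho>))"
abbreviation "MT \<equiv> PiM (UNIV :: (('d::finite \<Rightarrow> int) \<times> nat \<times> nat) set) (\<lambda>_. density lborel (exponential_density 1))"
abbreviation "MX p \<equiv> PiM (UNIV :: (('d::finite \<Rightarrow> int) \<times> nat \<times> nat) set) (\<lambda>_. measure_pmf p)"

lemma mpmf_borel: "(f :: 'a \<Rightarrow> 'b::topological_space) \<in> borel_measurable (measure_pmf q)"
  by simp

lemma ps_exp: "prob_space (density lborel (exponential_density 1))"
  by (rule prob_space_exponential_density) simp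

lemma ps_MN: "prob_space (MN \<rho>)" by (rule prob_space_PiM) (simp add: prob_space_measure_pmf)
lemma ps_MT: "prob_space MT" by (rule prob_space_PiM) (rule ps_exp)
lemma ps_MX: "prob_space (MX p)" by (rule prob_space_PiM) (simp add: prob_space_measure_pmf)
lemma ps_MTX: "prob_space (MT \<Otimes>\<^sub>M MX p)" by (rule prob_space_pair[OF ps_MT ps_MX])
lemma ps_M: "prob_space (irw_space \<rho> p)"
  unfolding irw_space_def by (rule prob_space_pair[OF ps_MN ps_MTX])

lemma N_meas[measurable]: "(\<lambda>\<omega>::'d::finite irw_omega. real (fst \<omega> x)) \<in> borel_measurable (irw_space \<rho> p)"
  using N_meas' by (rule measurable_compose) simp

lemma near_bound:
  fixes B :: "('d::finite \<Rightarrow> int) set"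
  assumes "0 < \<rho>" "finite B"
  shows "emeasure (irw_space \<rho> p) {\<omega> \<in> space (irw_space \<rho> p). K0 \<le> real (\<Sum>x\<in>B. fst \<omega> x)}
         \<le> ennreal (exp (\<rho> * (exp 1 - 1) * card B - K0))"
proof -
  let ?M = "irw_space \<rho> p"
  let ?h = "\<lambda>N::('d \<Rightarrow> int) \<Rightarrow> nat. \<Prod>x\<in>B. ennreal (exp (real (N x)))"
  have hm[measurable]: "?h \<in> borel_measurable (MN \<rho>)"
  proof (intro borel_measurable_prod_ennreal)
    fix x show "(\<lambda>N::('d \<Rightarrow> int) \<Rightarrow> nat. ennreal (exp (real (N x)))) \<in> borel_measurable (MN \<rho>)"
    proof -
      have c: "(\<lambda>N::('d \<Rightarrow> int) \<Rightarrow> nat. N x) \<in> measurable (MN \<rho>) (measure_pmf (poisson_pmf \<rho>))"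
        by (rule measurable_component_singleton) simp
      show ?thesis using c mpmf_borel by (rule measurable_compose)
    qed
  qed
  have set_m: "{\<omega> \<in> space ?M. K0 \<le> real (\<Sum>x\<in>B. fst \<omega> x)} \<in> sets ?M"
  proof -
    have "(\<lambda>\<omega>. real (\<Sum>x\<in>B. fst \<omega> x)) \<in> borel_measurable ?M"
      by (simp only: of_nat_sum) (intro borel_measurable_sum, simp add: N_meas)
    then show ?thesis by measurable
  qed
  have "emeasure ?M {\<omega> \<in> space ?M. K0 \<le> real (\<Sum>x\<in>B. fst \<omega> x)}
      = (\<integral>\<^sup>+\<omega>. indicator {\<omega> \<in> space ?M. K0 \<le> real (\<Sum>x\<in>B. fst \<omega> x)} \<omega> \<partial>?M)"
    using set_m by simp
  also have "\<dots> \<le> (\<integral>\<^sup>+\<omega>. ennreal (exp (- K0)) * ?h (fst \<omega>) \<partial>?M)"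
  proof (intro nn_integral_mono)
    fix \<omega> :: "'d irw_omega"
    have e: "ennreal (exp (- K0)) * ?h (fst \<omega>) = ennreal (exp (real (\<Sum>x\<in>B. fst \<omega> x) - K0))"
      using assms(2) by (simp add: prod_ennreal ennreal_mult'[symmetric] exp_sum[symmetric] exp_diff
          exp_minus field_simps of_nat_sum)
    show "indicator {\<omega> \<in> space ?M. K0 \<le> real (\<Sum>x\<in>B. fst \<omega> x)} \<omega> \<le> ennreal (exp (- K0)) * ?h (fst \<omega>)"
      unfolding e by (auto split: split_indicator)
  qed
  also have "\<dots> = ennreal (exp (- K0)) * (\<integral>\<^sup>+\<omega>. ?h (fst \<omega>) \<partial>?M)"
    by (rule nn_integral_cmult) (simp add: irw_space_def)
  also have "(\<integral>\<^sup>+\<omega>. ?h (fst \<omega>) \<partial>?M) = (\<integral>\<^sup>+N. ?h N \<partial>MN \<rho>)"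
    unfolding irw_space_def by (rule pair_fst_nn[OF ps_MN ps_MTX hm])
  also have "\<dots> = (\<Prod>x\<in>B. \<integral>\<^sup>+n. ennreal (exp (real n)) \<partial>measure_pmf (poisson_pmf \<rho>))"
    by (rule PiM_prod_nn[OF _ assms(2)]) (simp_all add: prob_space_measure_pmf)
  also have "\<dots> = (\<Prod>x\<in>B. ennreal (exp (\<rho> * (exp 1 - 1))))"
    using poisson_exp_moment[OF assms(1)] by simp
  also have "ennreal (exp (- K0)) * \<dots> = ennreal (exp (- K0) * exp (\<rho> * (exp 1 - 1)) ^ card B)"
    by (simp add: ennreal_power ennreal_mult)
  also have "exp (- K0) * exp (\<rho> * (exp 1 - 1)) ^ card B = exp (\<rho> * (exp 1 - 1) * card B - K0)"
  proof -
    have "exp (\<rho> * (exp 1 - 1)) ^ card B = exp (real (card B) * (\<rho> * (exp 1 - 1)))"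
      by (rule exp_of_nat_mult[symmetric])
    then show ?thesis by (simp add: mult_exp_exp algebra_simps)
  qed
  finally show ?thesis .
qed

lemma tau_tail:
  fixes x :: "'d::finite \<Rightarrow> int"
  assumes b: "0 \<le> \<beta>" and n: "1 \<le> n"
  shows "emeasure (MT :: (('d \<Rightarrow> int) \<times> nat \<times> nat \<Rightarrow> real) measure) {\<tau> \<in> space MT. (\<Sum>i\<le>n-1. \<tau> (x,k,i)) \<le> L}
         \<le> ennreal (exp (\<beta> * L) * (1 / (1 + \<beta>)) ^ n)"
proof -
  let ?J = "(\<lambda>i. (x,k,i)) ` {..n-1}"
  have inj: "inj_on (\<lambda>i. (x,k,i)) {..n-1}" by (auto simp: inj_on_def)
  have cardJ: "card ?J = n" using card_image[OF inj] n by simp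
  have sm: "{\<tau> \<in> space MT. (\<Sum>i\<le>n-1. \<tau> (x,k,i)) \<le> L} \<in> sets (MT :: (('d \<Rightarrow> int) \<times> nat \<times> nat \<Rightarrow> real) measure)"
    by measurable
  have hm: "(\<lambda>\<tau>. \<Prod>y\<in>?J. ennreal (exp (- \<beta> * \<tau> y))) \<in> borel_measurable (MT :: (('d \<Rightarrow> int) \<times> nat \<times> nat \<Rightarrow> real) measure)"
    by measurable
  have "emeasure MT {\<tau> \<in> space MT. (\<Sum>i\<le>n-1. \<tau> (x,k,i)) \<le> L}
      = (\<integral>\<^sup>+\<tau>. indicator {\<tau> \<in> space MT. (\<Sum>i\<le>n-1. \<tau> (x,k,i)) \<le> L} \<tau> \<partial>MT)"
    using sm by simp
  also have "\<dots> \<le> (\<integral>\<^sup>+\<tau>. ennreal (exp (\<beta> * L)) * (\<Prod>y\<in>?J. ennreal (exp (- \<beta> * \<tau> y))) \<partial>MT)"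
  proof (intro nn_integral_mono)
    fix \<tau> :: "('d \<Rightarrow> int) \<times> nat \<times> nat \<Rightarrow> real"
    have "(\<Prod>y\<in>?J. ennreal (exp (- \<beta> * \<tau> y))) = ennreal (\<Prod>y\<in>?J. exp (- \<beta> * \<tau> y))"
      by (simp add: prod_ennreal)
    also have "(\<Prod>y\<in>?J. exp (- \<beta> * \<tau> y)) = exp (\<Sum>y\<in>?J. - \<beta> * \<tau> y)"
      by (simp add: exp_sum)
    also have "(\<Sum>y\<in>?J. - \<beta> * \<tau> y) = (\<Sum>i\<le>n-1. - \<beta> * \<tau> (x,k,i))"
      using sum.reindex[OF inj, of "\<lambda>y. - \<beta> * \<tau> y"] by (simp add: comp_def)
    also have "\<dots> = - \<beta> * (\<Sum>i\<le>n-1. \<tau> (x,k,i))"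
      by (simp add: sum_distrib_left)
    finally have e: "ennreal (exp (\<beta> * L)) * (\<Prod>y\<in>?J. ennreal (exp (- \<beta> * \<tau> y)))
        = ennreal (exp (\<beta> * (L - (\<Sum>i\<le>n-1. \<tau> (x,k,i)))))"
      by (simp add: ennreal_mult[symmetric] mult_exp_exp algebra_simps)
    show "indicator {\<tau> \<in> space MT. (\<Sum>i\<le>n-1. \<tau> (x,k,i)) \<le> L} \<tau>
        \<le> ennreal (exp (\<beta> * L)) * (\<Prod>y\<in>?J. ennreal (exp (- \<beta> * \<tau> y)))"
      unfolding e using b by (auto split: split_indicator)
  qed
  also have "\<dots> = ennreal (exp (\<beta> * L)) * (\<integral>\<^sup>+\<tau>. (\<Prod>y\<in>?J. ennreal (exp (- \<beta> * \<tau> y))) \<partial>MT)"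
    by (rule nn_integral_cmult) (rule hm)
  also have "(\<integral>\<^sup>+\<tau>. (\<Prod>y\<in>?J. ennreal (exp (- \<beta> * \<tau> y))) \<partial>MT)
      = (\<Prod>y\<in>?J. \<integral>\<^sup>+s. ennreal (exp (- \<beta> * s)) \<partial>density lborel (exponential_density 1))"
    by (rule PiM_prod_nn[OF ps_exp]) simp_all
  also have "\<dots> = (\<Prod>y\<in>?J. ennreal (1 / (1 + \<beta>)))"
    using exp_density_laplace[OF b] by simp
  also have "\<dots> = ennreal ((1 / (1 + \<beta>)) ^ n)"
    using cardJ b by (simp add: ennreal_power)
  also have "ennreal (exp (\<beta> * L)) * \<dots> = ennreal (exp (\<beta> * L) * (1 / (1 + \<beta>)) ^ n)"
    using b by (simp add: ennreal_mult)
  finally show ?thesis .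
qed

lemma poisson_tail_sum:
  assumes "0 < \<rho>"
  shows "(\<Sum>k. emeasure (measure_pmf (poisson_pmf \<rho>)) {k<..}) = ennreal \<rho>"
proof -
  have "(\<Sum>k. emeasure (measure_pmf (poisson_pmf \<rho>)) {k<..}) = (\<Sum>k. \<integral>\<^sup>+m. indicator {k<..} m \<partial>measure_pmf (poisson_pmf \<rho>))"
    by simp
  also have "\<dots> = (\<integral>\<^sup>+m. (\<Sum>k. indicator {k<..} m) \<partial>measure_pmf (poisson_pmf \<rho>))"
    by (rule nn_integral_suminf[symmetric]) simp
  also have "\<dots> = (\<integral>\<^sup>+m. ennreal (real m) \<partial>measure_pmf (poisson_pmf \<rho>))"
  proof (intro nn_integral_cong)
    fix m :: nat
    have "(\<Sum>k. indicator {k<..} m :: ennreal) = (\<Sum>k<m. indicator {k<..} m)"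
      by (rule suminf_finite) (auto split: split_indicator)
    also have "\<dots> = (\<Sum>k<m. 1)" by (intro sum.cong) (auto split: split_indicator)
    finally show "(\<Sum>k. indicator {k<..} m :: ennreal) = ennreal (real m)"
      by (simp add: ennreal_of_nat_eq_real_of_nat)
  qed
  also have "\<dots> = ennreal \<rho>" by (rule poisson_mean[OF assms])
  finally show ?thesis .
qed

lemma emeasure_triple:
  assumes P2: "prob_space M2" and P3: "prob_space M3" and A: "A \<in> sets M1" and B: "B \<in> sets M2"
  shows "emeasure (M1 \<Otimes>\<^sub>M (M2 \<Otimes>\<^sub>M M3)) (A \<times> (B \<times> space M3)) = emeasure M1 A * emeasure M2 B"
proof -
  interpret T: prob_space "M2 \<Otimes>\<^sub>M M3" by (rule prob_space_pair[OF P2 P3])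
  interpret X: prob_space M3 by (rule P3)
  have "emeasure (M1 \<Otimes>\<^sub>M (M2 \<Otimes>\<^sub>M M3)) (A \<times> (B \<times> space M3)) = emeasure M1 A * emeasure (M2 \<Otimes>\<^sub>M M3) (B \<times> space M3)"
    using A B by (intro T.emeasure_pair_measure_Times) auto
  also have "emeasure (M2 \<Otimes>\<^sub>M M3) (B \<times> space M3) = emeasure M2 B"
    using B by (simp add: X.emeasure_pair_measure_Times X.emeasure_space_1)
  finally show ?thesis .
qed

lemma far_x:
  fixes x :: "'d::finite \<Rightarrow> int"
  assumes r: "0 < \<rho>" and b: "0 \<le> \<beta>" and n: "1 \<le> n"
  shows "emeasure (irw_space \<rho> p) {\<omega> \<in> space (irw_space \<rho> p). \<exists>k. k < fst \<omega> x \<and> Sx \<omega> (x,k) (n-1) \<le> L}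
         \<le> ennreal \<rho> * ennreal (exp (\<beta> * L) * (1 / (1 + \<beta>)) ^ n)"
proof -
  let ?M = "irw_space \<rho> p"
  let ?Q = "ennreal (exp (\<beta> * L) * (1 / (1 + \<beta>)) ^ n)"
  define E where "E k = {\<omega> \<in> space ?M. k < fst \<omega> x \<and> Sx \<omega> (x,k) (n-1) \<le> L}" for k
  define A1 where "A1 k = {N \<in> space (MN \<rho>). k < N x}" for k
  define A2 where "A2 k = {\<tau> \<in> space MT. (\<Sum>i\<le>n-1. \<tau> (x,k,i)) \<le> L}" for k
  have A1m: "A1 k \<in> sets (MN \<rho>)" for k
  proof -
    have c: "(\<lambda>N::('d \<Rightarrow> int) \<Rightarrow> nat. N x) \<in> measurable (MN \<rho>) (count_space UNIV)"
      using measurable_component_singleton[OF UNIV_I, of x "\<lambda>_. measure_pmf (poisson_pmf \<rho>)"]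
      by (rule measurable_compose) simp
    show ?thesis unfolding A1_def using c by measurable
  qed
  have A2m: "A2 k \<in> sets (MT :: (('d \<Rightarrow> int) \<times> nat \<times> nat \<Rightarrow> real) measure)" for k
    unfolding A2_def by measurable
  have Eeq: "E k = A1 k \<times> (A2 k \<times> space (MX p))" for k
    by (auto simp: E_def A1_def A2_def Sx_def irw_space_def space_pair_measure space_PiM)
  have EP: "emeasure ?M (E k) = emeasure (MN \<rho>) (A1 k) * emeasure MT (A2 k)" for k
    unfolding Eeq irw_space_def by (rule emeasure_triple[OF ps_MT ps_MX A1m A2m])
  have P1: "emeasure (MN \<rho>) (A1 k) = emeasure (measure_pmf (poisson_pmf \<rho>)) {k<..}" for k
  proof -
    interpret product_prob_space "\<lambda>_::('d \<Rightarrow> int). measure_pmf (poisson_pmf \<rho>)" UNIV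
      by (rule product_prob_spaceI) (simp add: prob_space_measure_pmf)
    show ?thesis unfolding A1_def using emeasure_PiM_Collect_single[of x "{k<..}"] by simp
  qed
  have "{\<omega> \<in> space ?M. \<exists>k. k < fst \<omega> x \<and> Sx \<omega> (x,k) (n-1) \<le> L} = (\<Union>k. E k)"
    by (auto simp: E_def)
  moreover have "range E \<subseteq> sets ?M"
    using A1m A2m by (auto simp: Eeq irw_space_def intro!: pair_measureI)
  ultimately have "emeasure ?M {\<omega> \<in> space ?M. \<exists>k. k < fst \<omega> x \<and> Sx \<omega> (x,k) (n-1) \<le> L} \<le> (\<Sum>k. emeasure ?M (E k))"
    using emeasure_subadditive_countably[of E ?M] by simp
  also have "\<dots> \<le> (\<Sum>k. emeasure (measure_pmf (poisson_pmf \<rho>)) {k<..} * ?Q)"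
  proof (intro suminf_le summableI)
    fix k
    show "emeasure ?M (E k) \<le> emeasure (measure_pmf (poisson_pmf \<rho>)) {k<..} * ?Q"
      unfolding EP P1 A2_def by (intro mult_left_mono tau_tail b n) simp
  qed
  also have "\<dots> = ennreal \<rho> * ?Q"
    by (simp add: ennreal_suminf_multc poisson_tail_sum[OF r])
  finally show ?thesis .
qed

definition norm1 :: "('d::finite \<Rightarrow> int) \<Rightarrow> nat" where
  "norm1 x = nat (\<Sum>i\<in>UNIV. \<bar>x i\<bar>)"

lemma norm1_set_sub: "{x::'d::finite \<Rightarrow> int. norm1 x = n} \<subseteq> Pi\<^sub>E UNIV (\<lambda>_. {- int n..int n})"
proof
  fix x :: "'d \<Rightarrow> int" assume "x \<in> {x. norm1 x = n}"
  moreover have "0 \<le> (\<Sum>i\<in>UNIV. \<bar>x i\<bar>)" by (intro sum_nonneg) simp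
  ultimately have n: "(\<Sum>i\<in>UNIV. \<bar>x i\<bar>) = int n" by (simp add: norm1_def nat_eq_iff)
  have "\<bar>x i\<bar> \<le> int n" for i
    using member_le_sum[of i UNIV "\<lambda>i. \<bar>x i\<bar>"] n by simp
  then have "- int n \<le> x i \<and> x i \<le> int n" for i by (metis abs_le_iff minus_le_iff)
  then show "x \<in> Pi\<^sub>E UNIV (\<lambda>_. {- int n..int n})" by (simp add: PiE_iff)
qed

lemma norm1_set_finite: "finite {x::'d::finite \<Rightarrow> int. norm1 x = n}"
  by (rule finite_subset[OF norm1_set_sub]) (simp add: finite_PiE)

lemma norm1_set_card: "card {x::'d::finite \<Rightarrow> int. norm1 x = n} \<le> (2 * n + 1) ^ CARD('d)"
proof -
  have "card {x::'d::finite \<Rightarrow> int. norm1 x = n} \<le> card (Pi\<^sub>E (UNIV::'d set) (\<lambda>_. {- int n..int n}))"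
    by (rule card_mono[OF _ norm1_set_sub]) (simp add: finite_PiE)
  also have "\<dots> = (2 * n + 1) ^ CARD('d)"
    by (simp add: card_PiE nat_add_distrib nat_mult_distrib)
  finally show ?thesis .
qed

lemma group_bound:
  fixes g :: "nat \<Rightarrow> ennreal"
  shows "(\<integral>\<^sup>+x. g (norm1 (x::'d::finite \<Rightarrow> int)) \<partial>count_space UNIV) \<le> (\<Sum>n. g n * of_nat ((2 * n + 1) ^ CARD('d)))"
proof -
  have "(\<integral>\<^sup>+x. g (norm1 (x::'d \<Rightarrow> int)) \<partial>count_space UNIV)
      = (\<integral>\<^sup>+x. (\<Sum>n. g n * indicator {x::'d \<Rightarrow> int. norm1 x = n} x) \<partial>count_space UNIV)"
  proof (intro nn_integral_cong)
    fix x :: "'d \<Rightarrow> int"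
    have "(\<Sum>n. g n * indicator {x::'d \<Rightarrow> int. norm1 x = n} x) = (\<Sum>n\<in>{norm1 x}. g n * indicator {x::'d \<Rightarrow> int. norm1 x = n} x)"
      by (rule suminf_finite) auto
    then show "g (norm1 x) = (\<Sum>n. g n * indicator {x::'d \<Rightarrow> int. norm1 x = n} x)" by simp
  qed
  also have "\<dots> = (\<Sum>n. \<integral>\<^sup>+x. g n * indicator {x::'d \<Rightarrow> int. norm1 x = n} x \<partial>count_space UNIV)"
    by (rule nn_integral_suminf) simp
  also have "\<dots> = (\<Sum>n. g n * of_nat (card {x::'d \<Rightarrow> int. norm1 x = n}))"
    by (simp add: nn_integral_cmult norm1_set_finite)
  also have "\<dots> \<le> (\<Sum>n. g n * of_nat ((2 * n + 1) ^ CARD('d)))"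
  proof (intro suminf_le summableI mult_left_mono)
    fix n
    show "of_nat (card {x::'d \<Rightarrow> int. norm1 x = n}) \<le> (of_nat ((2 * n + 1) ^ CARD('d)) :: ennreal)"
      using norm1_set_card[of n] by (simp only: of_nat_le_iff)
  qed simp_all
  finally show ?thesis .
qed

lemma far_bound:
  fixes L :: real
  assumes r: "0 < \<rho>" and b: "0 \<le> \<beta>" and R: "1 \<le> R"
  shows "emeasure (irw_space \<rho> p) {\<omega> \<in> space (irw_space \<rho> p). \<exists>x::'d::finite \<Rightarrow> int. R \<le> norm1 x \<and>
            (\<exists>k. k < fst \<omega> x \<and> Sx \<omega> (x,k) (norm1 x - 1) \<le> L)}
         \<le> (\<Sum>n. (indicator {R..} n * (ennreal \<rho> * ennreal (exp (\<beta> * L) * (1 / (1 + \<beta>)) ^ n))) * of_nat ((2 * n + 1) ^ CARD('d)))"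
proof -
  let ?M = "irw_space \<rho> p"
  define F where "F x = {\<omega> \<in> space ?M. \<exists>k. k < fst \<omega> x \<and> Sx \<omega> (x,k) (norm1 x - 1) \<le> L}" for x :: "'d \<Rightarrow> int"
  define Far where "Far = {\<omega> \<in> space ?M. \<exists>x::'d \<Rightarrow> int. R \<le> norm1 x \<and> (\<exists>k. k < fst \<omega> x \<and> Sx \<omega> (x,k) (norm1 x - 1) \<le> L)}"
  have Fm[measurable]: "F x \<in> sets ?M" for x unfolding F_def by measurable
  have Farm: "Far \<in> sets ?M" unfolding Far_def by measurable
  define h where "h x \<omega> = (indicator {x::'d \<Rightarrow> int. R \<le> norm1 x} x * indicator (F x) \<omega> :: ennreal)" for x \<omega>
  have hm: "h x \<in> borel_measurable ?M" for x unfolding h_def by measurable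
  define G where "G n = indicator {R..} n * (ennreal \<rho> * ennreal (exp (\<beta> * L) * (1 / (1 + \<beta>)) ^ n))" for n
  have "emeasure ?M Far = (\<integral>\<^sup>+\<omega>. indicator Far \<omega> \<partial>?M)" using Farm by simp
  also have "\<dots> \<le> (\<integral>\<^sup>+\<omega>. \<integral>\<^sup>+x. h x \<omega> \<partial>count_space UNIV \<partial>?M)"
  proof (intro nn_integral_mono)
    fix \<omega> assume "\<omega> \<in> space ?M"
    show "indicator Far \<omega> \<le> (\<integral>\<^sup>+x. h x \<omega> \<partial>count_space UNIV)"
    proof (cases "\<omega> \<in> Far")
      case True
      then obtain x0 where x0: "R \<le> norm1 x0" "\<omega> \<in> F x0" by (auto simp: Far_def F_def)
      have "(\<integral>\<^sup>+x. h x \<omega> * indicator {x0} x \<partial>count_space UNIV) = h x0 \<omega>"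
        by (simp add: nn_integral_indicator_singleton)
      also have "h x0 \<omega> = 1" using x0 by (simp add: h_def)
      moreover have "(\<integral>\<^sup>+x. h x \<omega> * indicator {x0} x \<partial>count_space UNIV) \<le> (\<integral>\<^sup>+x. h x \<omega> \<partial>count_space UNIV)"
        by (intro nn_integral_mono) (auto split: split_indicator)
      ultimately have "1 \<le> (\<integral>\<^sup>+x. h x \<omega> \<partial>count_space UNIV)" by simp
      then show ?thesis using True by simp
    qed simp
  qed
  also have "\<dots> = (\<integral>\<^sup>+x. \<integral>\<^sup>+\<omega>. h x \<omega> \<partial>?M \<partial>count_space UNIV)"
    by (rule nn_integral_count_space_nn_integral) (simp_all add: hm)
  also have "\<dots> = (\<integral>\<^sup>+x. indicator {x::'d \<Rightarrow> int. R \<le> norm1 x} x * emeasure ?M (F x) \<partial>count_space UNIV)"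
    by (simp add: h_def nn_integral_cmult)
  also have "\<dots> \<le> (\<integral>\<^sup>+x. G (norm1 (x::'d \<Rightarrow> int)) \<partial>count_space UNIV)"
  proof (rule nn_integral_mono)
    fix x :: "'d \<Rightarrow> int"
    show "indicator {x::'d \<Rightarrow> int. R \<le> norm1 x} x * emeasure ?M (F x) \<le> G (norm1 x)"
    proof (cases "R \<le> norm1 x")
      case True
      then have "emeasure ?M (F x) \<le> ennreal \<rho> * ennreal (exp (\<beta> * L) * (1 / (1 + \<beta>)) ^ norm1 x)"
        unfolding F_def using R by (intro far_x r b) simp
      then show ?thesis using True by (simp add: G_def)
    qed (simp add: G_def)
  qed
  also have "\<dots> \<le> (\<Sum>n. (indicator {R..} n * (ennreal \<rho> * ennreal (exp (\<beta> * L) * (1 / (1 + \<beta>)) ^ n))) * of_nat ((2 * n + 1) ^ CARD('d)))"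
    unfolding G_def by (rule group_bound)
  finally show ?thesis unfolding Far_def .
qed

lemma AE_snd_pair:
  assumes "sigma_finite_measure M2" and "AE y in M2. P y"
  shows "AE x in M1 \<Otimes>\<^sub>M M2. P (snd x)"
proof -
  interpret S: sigma_finite_measure M2 by (rule assms(1))
  from assms(2) obtain N where N: "{y \<in> space M2. \<not> P y} \<subseteq> N" "N \<in> sets M2" "emeasure M2 N = 0" by (rule AE_E)
  then have N2: "N \<in> null_sets M2" by (simp add: null_sets_def)
  have "space M1 \<times> N \<in> null_sets (M1 \<Otimes>\<^sub>M M2)" using N2 by (intro S.times_in_null_sets2) auto
  moreover have "{x \<in> space (M1 \<Otimes>\<^sub>M M2). \<not> P (snd x)} \<subseteq> space M1 \<times> N"
    using N(1) by (auto simp: space_pair_measure)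
  ultimately show ?thesis by (rule AE_I')
qed

lemma AE_fst_pair:
  assumes "sigma_finite_measure M2" and "AE y in M1. P y"
  shows "AE x in M1 \<Otimes>\<^sub>M M2. P (fst x)"
proof -
  interpret S: sigma_finite_measure M2 by (rule assms(1))
  from assms(2) obtain N where N: "{y \<in> space M1. \<not> P y} \<subseteq> N" "N \<in> sets M1" "emeasure M1 N = 0" by (rule AE_E)
  then have N2: "N \<in> null_sets M1" by (simp add: null_sets_def)
  have "N \<times> space M2 \<in> null_sets (M1 \<Otimes>\<^sub>M M2)" using N2 by (intro S.times_in_null_sets1) auto
  moreover have "{x \<in> space (M1 \<Otimes>\<^sub>M M2). \<not> P (fst x)} \<subseteq> N \<times> space M2"
    using N(1) by (auto simp: space_pair_measure)
  ultimately show ?thesis by (rule AE_I')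
qed

lemma AE_good:
  "AE \<omega> in irw_space \<rho> p. \<forall>y::('d::finite \<Rightarrow> int) \<times> nat \<times> nat. 0 \<le> fst (snd \<omega>) y \<and> snd (snd \<omega>) y \<in> set_pmf p"
proof -
  interpret PT: product_prob_space "\<lambda>_::('d \<Rightarrow> int) \<times> nat \<times> nat. density lborel (exponential_density 1)" UNIV
    by (rule product_prob_spaceI) (rule ps_exp)
  interpret PX: product_prob_space "\<lambda>_::('d \<Rightarrow> int) \<times> nat \<times> nat. measure_pmf p" UNIV
    by (rule product_prob_spaceI) (simp add: prob_space_measure_pmf)
  have e: "AE s in density lborel (exponential_density 1). 0 \<le> s"
    by (subst AE_density) (auto simp: exponential_density_def)
  have t: "AE \<tau> in (MT :: (('d \<Rightarrow> int) \<times> nat \<times> nat \<Rightarrow> real) measure). \<forall>y. 0 \<le> \<tau> y"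
    by (subst AE_all_countable) (intro allI PT.AE_component e UNIV_I)
  have x: "AE \<xi> in (MX p :: (('d \<Rightarrow> int) \<times> nat \<times> nat \<Rightarrow> 'd \<Rightarrow> int) measure). \<forall>y. \<xi> y \<in> set_pmf p"
    by (subst AE_all_countable) (intro allI PX.AE_component AE_measure_pmf UNIV_I)
  have sfX: "sigma_finite_measure (MX p :: (('d \<Rightarrow> int) \<times> nat \<times> nat \<Rightarrow> 'd \<Rightarrow> int) measure)"
    using ps_MX by (rule prob_space_imp_sigma_finite)
  have sfT: "sigma_finite_measure ((MT :: (('d \<Rightarrow> int) \<times> nat \<times> nat \<Rightarrow> real) measure) \<Otimes>\<^sub>M MX p)"
    using ps_MTX by (rule prob_space_imp_sigma_finite)
  have "AE z in (MT :: (('d \<Rightarrow> int) \<times> nat \<times> nat \<Rightarrow> real) measure) \<Otimes>\<^sub>M MX p. \<forall>y. 0 \<le> fst z y \<and> snd z y \<in> set_pmf p"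
    using AE_fst_pair[OF sfX t] AE_snd_pair[OF sfX x] by eventually_elim auto
  then show ?thesis unfolding irw_space_def by (rule AE_snd_pair[OF sfT])
qed

lemma unit_norm:
  assumes "nn_law p" "v \<in> set_pmf p"
  shows "(\<Sum>i\<in>UNIV. \<bar>v i\<bar>) = (1::int)"
proof -
  from assms obtain i where "v = unit_vec i \<or> v = (\<lambda>j. - unit_vec i j)" by (auto simp: nn_law_def)
  then show ?thesis by (auto simp: unit_vec_def if_distrib sum.If_cases)
qed

lemma norm1_le_card:
  fixes x :: "'d::finite \<Rightarrow> int" and \<xi> :: "nat \<Rightarrow> 'd \<Rightarrow> int"
  assumes "nn_law p" "\<And>j. \<xi> j \<in> set_pmf p" "finite J" "\<And>i. x i + (\<Sum>j\<in>J. \<xi> j i) = 0"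
  shows "norm1 x \<le> card J"
proof -
  have "\<bar>x i\<bar> \<le> (\<Sum>j\<in>J. \<bar>\<xi> j i\<bar>)" for i
  proof -
    have "x i = - (\<Sum>j\<in>J. \<xi> j i)" using assms(4)[of i] by linarith
    then have "\<bar>x i\<bar> = \<bar>\<Sum>j\<in>J. \<xi> j i\<bar>" by simp
    also have "\<dots> \<le> (\<Sum>j\<in>J. \<bar>\<xi> j i\<bar>)" by (rule sum_abs)
    finally show ?thesis .
  qed
  then have "(\<Sum>i\<in>UNIV. \<bar>x i\<bar>) \<le> (\<Sum>i\<in>UNIV. \<Sum>j\<in>J. \<bar>\<xi> j i\<bar>)" by (intro sum_mono)
  also have "\<dots> = (\<Sum>j\<in>J. \<Sum>i\<in>UNIV. \<bar>\<xi> j i\<bar>)" by (rule sum.swap)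
  also have "\<dots> = (\<Sum>j\<in>J. 1)" using unit_norm[OF assms(1) assms(2)] by simp
  finally show ?thesis by (simp add: norm1_def)
qed

lemma inclusion:
  fixes \<omega> :: "'d::finite irw_omega"
  assumes law: "nn_law p" and R: "1 \<le> R"
    and good: "\<forall>y. 0 \<le> fst (snd \<omega>) y \<and> snd (snd \<omega>) y \<in> set_pmf p"
    and A: "\<exists>t\<in>{0..L}. ereal K \<le> ereal_of_enat (irw_eta \<omega> t (\<lambda>_. 0))"
    and nF: "\<not> (\<exists>x::'d \<Rightarrow> int. R \<le> norm1 x \<and> (\<exists>k. k < fst \<omega> x \<and> Sx \<omega> (x,k) (norm1 x - 1) \<le> L))"
  shows "K \<le> real (\<Sum>x\<in>{x. norm1 x < R}. fst \<omega> x)"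
proof -
  from A obtain t where t: "t \<in> {0..L}" and Kt: "ereal K \<le> ereal_of_enat (irw_eta \<omega> t (\<lambda>_. 0))" by blast
  define SS where "SS = {(x, k). k < fst \<omega> x \<and> irw_pos \<omega> x k t = (\<lambda>_. 0)}"
  have finB: "finite {x::'d \<Rightarrow> int. norm1 x < R}"
  proof -
    have "{x::'d \<Rightarrow> int. norm1 x < R} \<subseteq> (\<Union>n<R. {x. norm1 x = n})" by auto
    moreover have "finite (\<Union>n<R. {x::'d \<Rightarrow> int. norm1 x = n})"
      by (intro finite_UN_I) (simp_all add: norm1_set_finite)
    ultimately show ?thesis by (rule finite_subset)
  qed
  have sub: "SS \<subseteq> Sigma {x. norm1 x < R} (\<lambda>x. {..<fst \<omega> x})"
  proof
    fix f assume "f \<in> SS"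
    then obtain x k where f: "f = (x,k)" and k: "k < fst \<omega> x" and pos: "irw_pos \<omega> x k t = (\<lambda>_. 0)"
      by (auto simp: SS_def)
    have "norm1 x < R"
    proof (rule ccontr)
      assume "\<not> norm1 x < R"
      then have Rn: "R \<le> norm1 x" by simp
      let ?J = "Jset (Sx \<omega> (x,k)) t"
      show False
      proof (cases "finite ?J")
        case False
        then have "x = (\<lambda>_. 0)" using pos by (simp add: pos_eq)
        then have "norm1 x = 0" by (simp add: norm1_def)
        then show False using Rn R by simp
      next
        case True
        have "\<And>i. x i + (\<Sum>j\<in>?J. snd (snd \<omega>) (x,k,j) i) = 0"
          using pos by (simp add: pos_eq fun_eq_iff)
        then have "norm1 x \<le> card ?J"
          using norm1_le_card[OF law _ True, of "\<lambda>j. snd (snd \<omega>) (x,k,j)" x] good by blast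
        then have cJ: "R \<le> card ?J" using Rn by simp
        then have ne: "?J \<noteq> {}" using R by auto
        define m where "m = Max ?J"
        have mJ: "m \<in> ?J" using True ne by (simp add: m_def)
        have "?J \<subseteq> {..m}" using True by (auto simp: m_def)
        then have "card ?J \<le> Suc m" using card_mono[of "{..m}" ?J] by simp
        then have nm: "norm1 x - 1 \<le> m" using \<open>norm1 x \<le> card ?J\<close> by linarith
        have "Sx \<omega> (x,k) (norm1 x - 1) \<le> Sx \<omega> (x,k) m"
          unfolding Sx_def using nm good by (intro sum_mono2) auto
        also have "\<dots> \<le> t" using mJ by (simp add: Jset_def)
        also have "\<dots> \<le> L" using t by simp
        finally show False using nF Rn k by blast
      qed
    qed
    then show "f \<in> Sigma {x. norm1 x < R} (\<lambda>x. {..<fst \<omega> x})" using f k by simp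
  qed
  have "finite (Sigma {x. norm1 x < R} (\<lambda>x. {..<fst \<omega> x}))" using finB by (intro finite_SigmaI) auto
  then have finS: "finite SS" using sub by (rule finite_subset[rotated])
  have "irw_eta \<omega> t (\<lambda>_. 0) = enat (card SS)"
    using finS by (simp add: irw_eta_def SS_def Let_def)
  then have "K \<le> real (card SS)" using Kt by simp
  also have "card SS \<le> card (Sigma {x. norm1 x < R} (\<lambda>x. {..<fst \<omega> x}))"
    using sub finB by (intro card_mono) auto
  also have "\<dots> = (\<Sum>x\<in>{x. norm1 x < R}. fst \<omega> x)"
    using finB by (simp add: card_SigmaI)
  finally show ?thesis by simp
qed

lemma two_n_plus_one_le: "2 * n + 1 \<le> (3::nat) ^ n"
proof (induction n)
  case (Suc n)
  have "1 \<le> (3::nat) ^ n" by simp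
  then show ?case using Suc by simp
qed simp

lemma series_bound:
  fixes d R :: nat and \<rho> \<beta> L :: real
  assumes r: "0 < \<rho>" and b: "1 + \<beta> = 3 ^ d * exp 3"
  shows "(\<Sum>n. (indicator {R..} n * (ennreal \<rho> * ennreal (exp (\<beta> * L) * (1 / (1 + \<beta>)) ^ n))) * of_nat ((2 * n + 1) ^ d))
         \<le> ennreal (2 * (\<rho> * exp (\<beta> * L) * exp (- 2 * real R)))"
proof -
  define C where "C = \<rho> * exp (\<beta> * L) * exp (- 2 * real R)"
  have C0: "0 \<le> C" using r by (simp add: C_def)
  have bpos: "0 < 1 + \<beta>" using b by simp
  have trm: "(indicator {R..} n * (ennreal \<rho> * ennreal (exp (\<beta> * L) * (1 / (1 + \<beta>)) ^ n))) * of_nat ((2 * n + 1) ^ d)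
        \<le> ennreal (C * exp (-1) ^ n)" for n
  proof (cases "R \<le> n")
    case True
    have "(2 * n + 1) ^ d \<le> ((3::nat) ^ n) ^ d"
      by (intro power_mono two_n_plus_one_le) simp
    then have "real ((2 * n + 1) ^ d) \<le> real ((3 ^ n) ^ d)"
      by (simp only: of_nat_le_iff)
    also have "\<dots> = (3 ^ d) ^ n" by (metis of_nat_numeral of_nat_power power_mult mult.commute)
    finally have p: "real ((2 * n + 1) ^ d) \<le> (3 ^ d) ^ n" .
    have "(1 / (1 + \<beta>)) ^ n * real ((2 * n + 1) ^ d) \<le> (1 / (1 + \<beta>)) ^ n * (3 ^ d) ^ n"
      using p bpos by (intro mult_left_mono) simp_all
    also have "\<dots> = (1 / (1 + \<beta>) * 3 ^ d) ^ n" by (simp only: power_mult_distrib)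
    also have "1 / (1 + \<beta>) * 3 ^ d = exp (-3)"
      unfolding b by (simp add: exp_minus divide_inverse)
    also have "exp (-3) ^ n = exp (real n * (-3))" by (rule exp_of_nat_mult[symmetric])
    also have "\<dots> \<le> exp (- 2 * real R + real n * (-1))"
      using True by simp
    also have "\<dots> = exp (- 2 * real R) * exp (-1) ^ n"
      by (simp only: mult_exp_exp[symmetric] exp_of_nat_mult)
    finally have q: "(1 / (1 + \<beta>)) ^ n * real ((2 * n + 1) ^ d) \<le> exp (- 2 * real R) * exp (-1) ^ n" .
    have "\<rho> * (exp (\<beta> * L) * (1 / (1 + \<beta>)) ^ n) * real ((2 * n + 1) ^ d)
        = \<rho> * exp (\<beta> * L) * ((1 / (1 + \<beta>)) ^ n * real ((2 * n + 1) ^ d))" by (simp add: mult_ac)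
    also have "\<dots> \<le> \<rho> * exp (\<beta> * L) * (exp (- 2 * real R) * exp (-1) ^ n)"
      using q r by (intro mult_left_mono) simp_all
    also have "\<dots> = C * exp (-1) ^ n" by (simp add: C_def mult_ac)
    finally have "\<rho> * (exp (\<beta> * L) * (1 / (1 + \<beta>)) ^ n) * real ((2 * n + 1) ^ d) \<le> C * exp (-1) ^ n" .
    moreover have "(indicator {R..} n * (ennreal \<rho> * ennreal (exp (\<beta> * L) * (1 / (1 + \<beta>)) ^ n))) * of_nat ((2 * n + 1) ^ d)
        = ennreal (\<rho> * (exp (\<beta> * L) * (1 / (1 + \<beta>)) ^ n) * real ((2 * n + 1) ^ d))"
      using True r bpos by (simp add: ennreal_mult ennreal_of_nat_eq_real_of_nat)
    ultimately show ?thesis by (simp add: ennreal_leI)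
  qed simp
  have g: "(\<lambda>n. exp (-1::real) ^ n) sums (1 / (1 - exp (-1)))"
    by (rule geometric_sums) simp
  have "(\<Sum>n. (indicator {R..} n * (ennreal \<rho> * ennreal (exp (\<beta> * L) * (1 / (1 + \<beta>)) ^ n))) * of_nat ((2 * n + 1) ^ d))
      \<le> (\<Sum>n. ennreal (C * exp (-1) ^ n))"
    by (intro suminf_le summableI trm)
  also have "\<dots> = ennreal (\<Sum>n. C * exp (-1) ^ n)"
    using C0 by (intro suminf_ennreal2 summable_mult sums_summable[OF g]) simp
  also have "(\<Sum>n. C * exp (-1) ^ n) = C * (1 / (1 - exp (-1)))"
    using sums_unique[OF sums_mult[OF g, of C]] by simp
  also have "\<dots> \<le> 2 * C"
  proof -
    have "exp (-1::real) \<le> 1 / 2"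
    proof -
      have "2 \<le> exp (1::real)" using exp_ge_add_one_self[of 1] by simp
      then show ?thesis by (simp add: exp_minus field_simps)
    qed
    then have "1 / (1 - exp (-1::real)) \<le> 2" by (simp add: field_simps)
    from mult_left_mono[OF this C0] show ?thesis by (simp add: mult.commute)
  qed
  finally show ?thesis unfolding C_def by (simp add: ennreal_leI order_trans)
qed

lemma norm1_lt_sub: "{x::'d::finite \<Rightarrow> int. norm1 x < R} \<subseteq> Pi\<^sub>E UNIV (\<lambda>_. {- int R..int R})"
proof
  fix x :: "'d \<Rightarrow> int" assume "x \<in> {x. norm1 x < R}"
  moreover have "0 \<le> (\<Sum>i\<in>UNIV. \<bar>x i\<bar>)" by (intro sum_nonneg) simp
  ultimately have n: "(\<Sum>i\<in>UNIV. \<bar>x i\<bar>) \<le> int R" by (simp add: norm1_def)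
  have "\<bar>x i\<bar> \<le> int R" for i
    using member_le_sum[of i UNIV "\<lambda>i. \<bar>x i\<bar>"] n by simp
  then have "- int R \<le> x i \<and> x i \<le> int R" for i by (metis abs_le_iff minus_le_iff)
  then show "x \<in> Pi\<^sub>E UNIV (\<lambda>_. {- int R..int R})" by (simp add: PiE_iff)
qed

lemma norm1_lt_finite: "finite {x::'d::finite \<Rightarrow> int. norm1 x < R}"
  by (rule finite_subset[OF norm1_lt_sub]) (simp add: finite_PiE)

lemma norm1_lt_card: "card {x::'d::finite \<Rightarrow> int. norm1 x < R} \<le> (2 * R + 1) ^ CARD('d)"
proof -
  have "card {x::'d::finite \<Rightarrow> int. norm1 x < R} \<le> card (Pi\<^sub>E (UNIV::'d set) (\<lambda>_. {- int R..int R}))"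
    by (rule card_mono[OF _ norm1_lt_sub]) (simp add: finite_PiE)
  also have "\<dots> = (2 * R + 1) ^ CARD('d)"
    by (simp add: card_PiE nat_add_distrib nat_mult_distrib)
  finally show ?thesis .
qed

lemma real_near:
  fixes L \<rho> \<beta> D cB K :: real and R d :: nat
  assumes L: "1 \<le> L" and r: "0 < \<rho>" and rL: "\<rho> \<le> L ^ 2" and b: "0 \<le> \<beta>"
    and D: "D = (2 * \<beta> + 3) ^ d" and DL: "4 * D \<le> L ^ 2"
    and Rle: "real R \<le> \<beta> * L + 1" and cB: "cB \<le> real ((2 * R + 1) ^ d)" and K: "K = L ^ (d + 4)"
  shows "\<rho> * (exp 1 - 1) * cB - K \<le> - L / 2"
proof -
  have L0: "0 \<le> L" using L by simp
  have "real (2 * R + 1) \<le> (2 * \<beta> + 3) * L" using Rle L b by (simp add: algebra_simps)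
  then have "real ((2 * R + 1) ^ d) \<le> ((2 * \<beta> + 3) * L) ^ d"
    by (simp only: of_nat_power) (intro power_mono, simp_all)
  also have "\<dots> = D * L ^ d" by (simp add: D power_mult_distrib)
  finally have cB': "cB \<le> D * L ^ d" using cB by linarith
  have e2: "exp 1 - 1 \<le> (2::real)" using exp_le by simp
  have e0: "0 \<le> exp 1 - (1::real)" by simp
  have cB0: "0 \<le> cB \<or> cB < 0" by auto
  have "\<rho> * (exp 1 - 1) * cB \<le> L ^ 2 * 2 * (D * L ^ d)"
  proof (cases "0 \<le> cB")
    case True
    have "\<rho> * (exp 1 - 1) \<le> L ^ 2 * 2" using r rL e2 e0 by (intro mult_mono) simp_all
    from mult_mono[OF this cB'] show ?thesis using True by simp
  next
    case False
    then have "\<rho> * (exp 1 - 1) * cB \<le> 0" using r e0 by (simp add: mult_nonneg_nonpos)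
    also have "0 \<le> L ^ 2 * 2 * (D * L ^ d)" using b L0 by (simp add: D)
    finally show ?thesis .
  qed
  also have "\<dots> = 2 * D * L ^ (d + 2)" by (simp add: power_add power2_eq_square)
  also have "\<dots> \<le> (L ^ 2 / 2) * L ^ (d + 2)" using DL L0 by (intro mult_right_mono) simp_all
  also have "\<dots> = K / 2" by (simp add: K power_add power2_eq_square mult_ac numeral_eq_Suc)
  finally have "\<rho> * (exp 1 - 1) * cB - K \<le> - K / 2" by simp
  also have "L \<le> K"
  proof -
    have "L ^ 1 \<le> L ^ (d + 4)" using L by (intro power_increasing) simp_all
    then show ?thesis by (simp add: K)
  qed
  then have "- K / 2 \<le> - L / 2" by simp
  finally show ?thesis .
qed

lemma real_far:
  fixes L \<rho> \<beta> :: real and R :: nat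
  assumes L: "1 \<le> L" and r: "0 < \<rho>" and rL: "\<rho> \<le> L ^ 2" and b: "2 \<le> \<beta>" and Rge: "\<beta> * L \<le> real R"
  shows "2 * (\<rho> * exp (\<beta> * L) * exp (- 2 * real R)) \<le> 8 * exp (- L)"
proof -
  have "exp (\<beta> * L) * exp (- 2 * real R) = exp (\<beta> * L - 2 * real R)" by (simp add: mult_exp_exp)
  also have "\<dots> \<le> exp (- 2 * L)"
  proof -
    have "L * 2 \<le> L * \<beta>" using b L by (intro mult_left_mono) simp_all
    then show ?thesis using Rge by (simp add: algebra_simps)
  qed
  finally have e: "exp (\<beta> * L) * exp (- 2 * real R) \<le> exp (- 2 * L)" .
  have "1 + L / 2 \<le> exp (L / 2)" by (rule exp_ge_add_one_self)
  then have Lh: "L \<le> 2 * exp (L / 2)" by linarith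
  have "L ^ 2 \<le> (2 * exp (L / 2)) ^ 2" using Lh L by (intro power_mono) simp_all
  also have "\<dots> = 4 * exp L" by (simp add: power2_eq_square mult_exp_exp)
  finally have L2: "L ^ 2 \<le> 4 * exp L" .
  have "2 * (\<rho> * exp (\<beta> * L) * exp (- 2 * real R)) \<le> 2 * (L ^ 2 * exp (- 2 * L))"
    using e r rL by (simp add: mult.assoc) (intro mult_mono, simp_all)
  also have "\<dots> \<le> 2 * (4 * exp L * exp (- 2 * L))" using L2 by simp
  also have "\<dots> = 8 * exp (- L)" by (simp add: mult_exp_exp)
  finally show ?thesis .
qed

theorem lemma5p1:
  fixes p :: "('d::finite \<Rightarrow> int) pmf"
  assumes "nn_law p"
  shows "\<exists>c>0. \<forall>L::real. \<forall>\<rho>::real. 1 \<le> L \<longrightarrow> 0 < \<rho> \<longrightarrow> \<rho> \<le> L ^ 2 \<longrightarrow>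
    (let M = irw_space \<rho> p;
         A = {\<omega> \<in> space M. \<exists>t\<in>{0..L}.
                ereal (L ^ (CARD('d) + 4)) \<le> ereal_of_enat (irw_eta \<omega> t (\<lambda>_. 0))}
     in A \<in> sets M \<and> measure M A \<le> c * exp (- L / c))"
proof -
  define d where "d = CARD('d)"
  define \<beta> :: real where "\<beta> = 3 ^ d * exp 3 - 1"
  define D :: real where "D = (2 * \<beta> + 3) ^ d"
  define c :: real where "c = 9 + 4 * D"
  have e3: "4 \<le> exp (3::real)" using exp_ge_add_one_self[of 3] by simp
  have "1 \<le> (3::real) ^ d" by simp
  then have e33: "exp 3 \<le> 3 ^ d * exp (3::real)" using mult_right_mono[of 1 "3 ^ d" "exp 3"] by simp
  have b2: "2 \<le> \<beta>" using e3 e33 unfolding \<beta>_def by linarith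
  have D1: "1 \<le> D" unfolding D_def using b2 by (intro one_le_power) simp
  have c9: "9 \<le> c" using D1 by (simp add: c_def)
  have c0: "0 < c" using c9 by simp
  show ?thesis
  proof (intro exI[of _ c] conjI allI impI c0)
    fix L \<rho> :: real assume L: "1 \<le> L" and r: "0 < \<rho>" and rL: "\<rho> \<le> L ^ 2"
    let ?M = "irw_space \<rho> p"
    define K where "K = L ^ (CARD('d) + 4)"
    let ?A = "{\<omega> \<in> space ?M. \<exists>t\<in>{0..L}. ereal K \<le> ereal_of_enat (irw_eta \<omega> t (\<lambda>_. 0))}"
    interpret P: prob_space ?M by (rule ps_M)
    have Am: "?A \<in> sets ?M" by (rule A_meas)
    have "measure ?M ?A \<le> c * exp (- L / c)"
    proof (cases "L ^ 2 < 4 * D")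
      case True
      have "L \<le> L ^ 2" using L by (simp add: power2_eq_square)
      then have "L \<le> c" using True c_def by simp
      then have "- 1 \<le> - L / c" using c0 by (simp add: field_simps)
      then have e1: "exp (- 1) \<le> exp (- L / c)" by simp
      have e2: "1 / 3 \<le> exp (- 1 :: real)" using exp_le by (simp add: exp_minus field_simps)
      have ge: "9 * (1 / 3) \<le> c * exp (- L / c)"
        by (rule mult_mono[OF c9 order_trans[OF e2 e1]]) (use c0 in simp_all)
      have "measure ?M ?A \<le> 1" by (rule P.prob_le_1)
      then show ?thesis using ge by linarith
    next
      case False
      then have DL: "4 * D \<le> L ^ 2" by simp
      define R where "R = nat \<lceil>\<beta> * L\<rceil>"
      have bL: "2 \<le> \<beta> * L" using b2 L by (metis mult_le_cancel_left1 mult.commute order_trans less_le_trans zero_less_numeral order.strict_iff_not)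
      have Rge: "\<beta> * L \<le> real R" unfolding R_def by linarith
      have Rle: "real R \<le> \<beta> * L + 1" unfolding R_def using bL by linarith
      have R1: "1 \<le> R" using Rge bL by linarith
      define B where "B = {x::'d \<Rightarrow> int. norm1 x < R}"
      define Near where "Near = {\<omega> \<in> space ?M. K \<le> real (\<Sum>x\<in>B. fst \<omega> x)}"
      define Far where "Far = {\<omega> \<in> space ?M. \<exists>x::'d \<Rightarrow> int. R \<le> norm1 x \<and> (\<exists>k. k < fst \<omega> x \<and> Sx \<omega> (x,k) (norm1 x - 1) \<le> L)}"
      have finB: "finite B" unfolding B_def by (rule norm1_lt_finite)
      have Nm: "Near \<in> sets ?M"
      proof -
        have "(\<lambda>\<omega>. real (\<Sum>x\<in>B. fst \<omega> x)) \<in> borel_measurable ?M"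
          by (simp only: of_nat_sum) (intro borel_measurable_sum, simp add: N_meas)
        then show ?thesis unfolding Near_def by measurable
      qed
      have Fm: "Far \<in> sets ?M" unfolding Far_def by measurable
      have "emeasure ?M ?A \<le> emeasure ?M (Near \<union> Far)"
      proof (rule emeasure_mono_AE)
        show "AE x in ?M. x \<in> ?A \<longrightarrow> x \<in> Near \<union> Far"
          using AE_good
        proof eventually_elim
          case (elim \<omega>)
          show ?case
          proof (intro impI)
            assume "\<omega> \<in> ?A"
            then have sp: "\<omega> \<in> space ?M" and A: "\<exists>t\<in>{0..L}. ereal K \<le> ereal_of_enat (irw_eta \<omega> t (\<lambda>_. 0))" by auto
            show "\<omega> \<in> Near \<union> Far"
            proof (cases "\<omega> \<in> Far")
              case False
              then have nF: "\<not> (\<exists>x::'d \<Rightarrow> int. R \<le> norm1 x \<and> (\<exists>k. k < fst \<omega> x \<and> Sx \<omega> (x,k) (norm1 x - 1) \<le> L))"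
                using sp by (simp add: Far_def)
              have "K \<le> real (\<Sum>x\<in>{x. norm1 x < R}. fst \<omega> x)"
                by (rule inclusion[OF assms R1 elim A nF])
              then show ?thesis using sp by (simp add: Near_def B_def)
            qed simp
          qed
        qed
        show "Near \<union> Far \<in> sets ?M" using Nm Fm by simp
      qed
      also have "\<dots> \<le> emeasure ?M Near + emeasure ?M Far"
        using Nm Fm by (rule emeasure_subadditive)
      also have "\<dots> \<le> ennreal (exp (\<rho> * (exp 1 - 1) * card B - K)) + ennreal (2 * (\<rho> * exp (\<beta> * L) * exp (- 2 * real R)))"
      proof (rule add_mono)
        show "emeasure ?M Near \<le> ennreal (exp (\<rho> * (exp 1 - 1) * card B - K))"
          unfolding Near_def by (rule near_bound[OF r finB])
        have "emeasure ?M Far \<le> (\<Sum>n. (indicator {R..} n * (ennreal \<rho> * ennreal (exp (\<beta> * L) * (1 / (1 + \<beta>)) ^ n))) * of_nat ((2 * n + 1) ^ CARD('d)))"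
          unfolding Far_def using r b2 R1 by (intro far_bound) simp_all
        also have "\<dots> \<le> ennreal (2 * (\<rho> * exp (\<beta> * L) * exp (- 2 * real R)))"
          by (rule series_bound[OF r]) (simp add: \<beta>_def d_def)
        finally show "emeasure ?M Far \<le> ennreal (2 * (\<rho> * exp (\<beta> * L) * exp (- 2 * real R)))" .
      qed
      also have "\<dots> = ennreal (exp (\<rho> * (exp 1 - 1) * card B - K) + 2 * (\<rho> * exp (\<beta> * L) * exp (- 2 * real R)))"
        using r by (intro ennreal_plus[symmetric]) simp_all
      finally have em: "emeasure ?M ?A \<le> ennreal (exp (\<rho> * (exp 1 - 1) * card B - K) + 2 * (\<rho> * exp (\<beta> * L) * exp (- 2 * real R)))" .
      have X: "\<rho> * (exp 1 - 1) * card B - K \<le> - L / 2"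
      proof (rule real_near[OF L r rL _ D_def DL Rle _ _])
        show "0 \<le> \<beta>" using b2 by simp
        show "real (card B) \<le> real ((2 * R + 1) ^ d)"
          unfolding B_def d_def by (simp only: of_nat_le_iff) (rule norm1_lt_card)
        show "K = L ^ (d + 4)" by (simp add: K_def d_def)
      qed
      have Y: "2 * (\<rho> * exp (\<beta> * L) * exp (- 2 * real R)) \<le> 8 * exp (- L)"
        by (rule real_far[OF L r rL b2 Rge])
      have "measure ?M ?A \<le> exp (\<rho> * (exp 1 - 1) * card B - K) + 2 * (\<rho> * exp (\<beta> * L) * exp (- 2 * real R))"
      proof -
        have nn: "0 \<le> exp (\<rho> * (exp 1 - 1) * card B - K) + 2 * (\<rho> * exp (\<beta> * L) * exp (- 2 * real R))"
          using r by simp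
        have "ennreal (measure ?M ?A) \<le> ennreal (exp (\<rho> * (exp 1 - 1) * card B - K) + 2 * (\<rho> * exp (\<beta> * L) * exp (- 2 * real R)))"
          using em by (simp only: P.emeasure_eq_measure)
        then show ?thesis using ennreal_le_iff[OF nn] by blast
      qed
      also have "\<dots> \<le> exp (- L / 2) + 8 * exp (- L)" using X Y by (intro add_mono) simp_all
      also have "\<dots> \<le> 9 * exp (- L / 2)"
      proof -
        have "exp (- L) \<le> exp (- L / 2)" using L by simp
        then show ?thesis by simp
      qed
      also have "\<dots> \<le> c * exp (- L / c)"
      proof (rule mult_mono[OF c9])
        have "L / c \<le> L / 2" using L c9 by (intro divide_left_mono) simp_all
        then show "exp (- L / 2) \<le> exp (- L / c)" by simp
      qed (use c0 in simp_all)
      finally show ?thesis .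
    qed
    then show "let M = irw_space \<rho> p;
         A = {\<omega> \<in> space M. \<exists>t\<in>{0..L}.
                ereal (L ^ (CARD('d) + 4)) \<le> ereal_of_enat (irw_eta \<omega> t (\<lambda>_. 0))}
     in A \<in> sets M \<and> measure M A \<le> c * exp (- L / c)"
      using Am by (simp add: Let_def K_def)
  qed
qed

end
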